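(* If the algorithm Classifier outputs "Yes" on input configuration $G$, then $G$ is a feasible configuration.
   Context: Model. A configuration is a finite simple undirected connected graph $G$ with $n$ nodes, each node $v$ tagged with a non-negative integer $t_v$ (wakeup tag); smallest tag $0$, span $\sigma$ = largest tag. Nodes are anonymous and communicate in synchronous global rounds. A node $v$ wakes up in the first global round $r\le t_v$ in which it receives a message, if any, and otherwise in global round $t_v$; its local clock is $0$ in its wakeup round, it acts from local round $1$, and nodes do not know the global clock. In each round a node transmits a message to all neighbours, listens, or terminates. A listening node receives $M$ if exactly one neighbour transmits ($M$), hears collision noise (distinct from silence and messages) if at least two neighbours transmit, and silence otherwise; a transmitting node hears nothing. A DRIP is a common function mapping a node's history (what it heard in each local round $0,\ldots,i-1$, including whether/by which message it was woken) to its action in local round $i\ge1$, with every node eventually terminating permanently; a decision function maps each node's final history to $\{0,1\}$; a dedicated leader election algorithm for $G$ is a DRIP plus decision function such that exactly one node of $G$ outputs $1$; $G$ is feasible if one exists. Algorithm Classifier (centralized, input $G$): maintains a partition of the nodes into classes $\mathrm{class}(v)\in\{1,\ldots,\mathit{numClasses}\}$, initially all in class $1$. One iteration: for each node $v$, its label $L_v$ is the set of triples obtained as follows: for each neighbour $w$ with $\mathrm{class}(w)\ne\mathrm{class}(v)$ or $t_w\ne t_v$ form the pair $(\mathrm{class}(w),\sigma+1+t_w-t_v)$; for each distinct pair $(a,b)$ so formed, $L_v$ contains $(a,b,1)$ if exactly one neighbour yields it and $(a,b,* )$ otherwise. Then the partition is refined: two nodes share a new class iff they shared a class before and have equal labels.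 Main loop: for $i=1,\ldots,\lceil n/2\rceil$: record $\mathit{old}=\mathit{numClasses}$; do one iteration; if some class has exactly one node, output "Yes" and stop; else if the number of classes equals $\mathit{old}$, output "No" and stop. *)

theory Defs
  imports Main
begin

definition config :: "'a set \<Rightarrow> ('a \<Rightarrow> 'a \<Rightarrow> bool) \<Rightarrow> ('a \<Rightarrow> nat) \<Rightarrow> bool" where
  "config V E t \<longleftrightarrow> finite V \<and> V \<noteq> {} \<and>
     (\<forall>u v. E u v \<longrightarrow> u \<in> V \<and> v \<in> V) \<and>
     (\<forall>u v. E u v \<longrightarrow> E v u) \<and> (\<forall>v. \<not> E v v) \<and>
     (\<forall>u\<in>V. \<forall>v\<in>V. E\<^sup>*\<^sup>* u v) \<and>
     (\<exists>v\<in>V. t v = 0)"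

definition span :: "'a set \<Rightarrow> ('a \<Rightarrow> nat) \<Rightarrow> nat" where
  "span V t = Max (t ` V)"

text \<open>What a node hears in a local round: silence, collision noise, a message (messages are
  natural numbers), or nothing (when it transmitted). In local round 0 (the wakeup round)
  the entry is Heard m if the node was woken by message m, otherwise what it heard in the
  spontaneous wakeup round (Silence or Noise).\<close>
datatype obs = Silence | Noise | Heard nat | Nothing

datatype action = Transmit nat | Listen | Terminate

datatype nstate = Asleep | Awake "obs list" | Done "obs list"

fun tmsg :: "action \<Rightarrow> nat option" where
  "tmsg (Transmit m) = Some m"
| "tmsg _ = None"

text \<open>Action of node w in the current global round (an awake node with history h of length i
  acts in local round i; asleep and terminated nodes do not transmit).\<close>
definition act :: "(obs list \<Rightarrow> action) \<Rightarrow> ('a \<Rightarrow> nstate) \<Rightarrow> 'a \<Rightarrow> action" where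
  "act P s w = (case s w of Awake h \<Rightarrow> P h | _ \<Rightarrow> Listen)"

definition transmitters ::
  "'a set \<Rightarrow> ('a \<Rightarrow> 'a \<Rightarrow> bool) \<Rightarrow> (obs list \<Rightarrow> action) \<Rightarrow> ('a \<Rightarrow> nstate) \<Rightarrow> 'a \<Rightarrow> 'a set" where
  "transmitters V E P s v = {w \<in> V. E v w \<and> tmsg (act P s w) \<noteq> None}"

definition heard ::
  "'a set \<Rightarrow> ('a \<Rightarrow> 'a \<Rightarrow> bool) \<Rightarrow> (obs list \<Rightarrow> action) \<Rightarrow> ('a \<Rightarrow> nstate) \<Rightarrow> 'a \<Rightarrow> obs" where
  "heard V E P s v =
     (let T = transmitters V E P s v in
      if T = {} then Silence
      else if card T = 1 then Heard (the (tmsg (act P s (the_elem T))))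
      else Noise)"

definition step ::
  "'a set \<Rightarrow> ('a \<Rightarrow> 'a \<Rightarrow> bool) \<Rightarrow> ('a \<Rightarrow> nat) \<Rightarrow> (obs list \<Rightarrow> action) \<Rightarrow> nat
     \<Rightarrow> ('a \<Rightarrow> nstate) \<Rightarrow> ('a \<Rightarrow> nstate)" where
  "step V E t P r s = (\<lambda>v.
     case s v of
       Asleep \<Rightarrow> (case heard V E P s v of
                    Heard m \<Rightarrow> Awake [Heard m]
                  | ob \<Rightarrow> (if t v = r then Awake [ob] else Asleep))
     | Awake h \<Rightarrow> (case P h of
                    Transmit m \<Rightarrow> Awake (h @ [Nothing])
                  | Listen \<Rightarrow> Awake (h @ [heard V E P s v])
                  | Terminate \<Rightarrow> Done h)
     | Done h \<Rightarrow> Done h)"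

text \<open>run r = global state after global rounds 0, ..., r-1.\<close>
primrec run ::
  "'a set \<Rightarrow> ('a \<Rightarrow> 'a \<Rightarrow> bool) \<Rightarrow> ('a \<Rightarrow> nat) \<Rightarrow> (obs list \<Rightarrow> action) \<Rightarrow> nat \<Rightarrow> ('a \<Rightarrow> nstate)" where
  "run V E t P 0 = (\<lambda>v. Asleep)"
| "run V E t P (Suc r) = step V E t P r (run V E t P r)"

definition elects ::
  "'a set \<Rightarrow> ('a \<Rightarrow> 'a \<Rightarrow> bool) \<Rightarrow> ('a \<Rightarrow> nat) \<Rightarrow> (obs list \<Rightarrow> action) \<Rightarrow> (obs list \<Rightarrow> bool) \<Rightarrow> bool" where
  "elects V E t P D \<longleftrightarrow>
     (\<exists>r. (\<forall>v\<in>V. \<exists>h. run V E t P r v = Done h) \<and>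
          (\<exists>!v. v \<in> V \<and> (\<exists>h. run V E t P r v = Done h \<and> D h)))"

definition feasible :: "'a set \<Rightarrow> ('a \<Rightarrow> 'a \<Rightarrow> bool) \<Rightarrow> ('a \<Rightarrow> nat) \<Rightarrow> bool" where
  "feasible V E t \<longleftrightarrow> (\<exists>P D. elects V E t P D)"

text \<open>Classes are represented by the blocks of the partition: cls v is the class of v.\<close>
datatype mult = One | Many

definition cpair :: "'a set \<Rightarrow> ('a \<Rightarrow> nat) \<Rightarrow> ('a \<Rightarrow> 'a set) \<Rightarrow> 'a \<Rightarrow> 'a \<Rightarrow> 'a set \<times> int" where
  "cpair V t cls v w = (cls w, int (span V t) + 1 + int (t w) - int (t v))"

definition contrib :: "'a set \<Rightarrow> ('a \<Rightarrow> 'a \<Rightarrow> bool) \<Rightarrow> ('a \<Rightarrow> nat) \<Rightarrow> ('a \<Rightarrow> 'a set) \<Rightarrow> 'a \<Rightarrow> 'a set" where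
  "contrib V E t cls v = {w \<in> V. E v w \<and> (cls w \<noteq> cls v \<or> t w \<noteq> t v)}"

definition label :: "'a set \<Rightarrow> ('a \<Rightarrow> 'a \<Rightarrow> bool) \<Rightarrow> ('a \<Rightarrow> nat) \<Rightarrow> ('a \<Rightarrow> 'a set) \<Rightarrow> 'a
     \<Rightarrow> ('a set \<times> int \<times> mult) set" where
  "label V E t cls v =
     {(a, b, if card {w \<in> contrib V E t cls v. cpair V t cls v w = (a, b)} = 1 then One else Many)
      | a b. \<exists>w \<in> contrib V E t cls v. cpair V t cls v w = (a, b)}"

definition refine :: "'a set \<Rightarrow> ('a \<Rightarrow> 'a \<Rightarrow> bool) \<Rightarrow> ('a \<Rightarrow> nat) \<Rightarrow> ('a \<Rightarrow> 'a set) \<Rightarrow> ('a \<Rightarrow> 'a set)" where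
  "refine V E t cls = (\<lambda>v. {u \<in> cls v. label V E t cls u = label V E t cls v})"

definition classes :: "'a set \<Rightarrow> ('a \<Rightarrow> 'a \<Rightarrow> bool) \<Rightarrow> ('a \<Rightarrow> nat) \<Rightarrow> nat \<Rightarrow> ('a \<Rightarrow> 'a set)" where
  "classes V E t k = (refine V E t ^^ k) (\<lambda>v. V)"

definition numClasses :: "'a set \<Rightarrow> ('a \<Rightarrow> 'a \<Rightarrow> bool) \<Rightarrow> ('a \<Rightarrow> nat) \<Rightarrow> nat \<Rightarrow> nat" where
  "numClasses V E t k = card (classes V E t k ` V)"

definition has_singleton :: "'a set \<Rightarrow> ('a \<Rightarrow> 'a \<Rightarrow> bool) \<Rightarrow> ('a \<Rightarrow> nat) \<Rightarrow> nat \<Rightarrow> bool" where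
  "has_singleton V E t k \<longleftrightarrow> (\<exists>v\<in>V. card (classes V E t k v) = 1)"

text \<open>Classifier outputs Yes: at some iteration i in 1..ceil(n/2) a singleton class appears,
  and no earlier iteration stopped (no singleton class, and the number of classes changed).\<close>
definition classifier_yes :: "'a set \<Rightarrow> ('a \<Rightarrow> 'a \<Rightarrow> bool) \<Rightarrow> ('a \<Rightarrow> nat) \<Rightarrow> bool" where
  "classifier_yes V E t \<longleftrightarrow>
     (\<exists>i. 1 \<le> i \<and> i \<le> (card V + 1) div 2 \<and> has_singleton V E t i \<and>
          (\<forall>j. 1 \<le> j \<and> j < i \<longrightarrow>
               \<not> has_singleton V E t j \<and> numClasses V E t j \<noteq> numClasses V E t (j - 1)))"

end

theory Submission
  imports Defs
begin

lemma mult_block_uniq: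
  fixes a a' W x y :: nat
  assumes "a*W + x = a'*W + y" "x < W + y" "y < W + x"
  shows "a = a' \<and> x = y"
proof -
  have "\<not> a < a'"
  proof
    assume "a < a'"
    then have "(a+1)*W \<le> a'*W" by (intro mult_le_mono1) simp
    then show False using assms by (simp add: algebra_simps)
  qed
  moreover have "\<not> a' < a"
  proof
    assume "a' < a"
    then have "(a'+1)*W \<le> a*W" by (intro mult_le_mono1) simp
    then show False using assms by (simp add: algebra_simps)
  qed
  ultimately show ?thesis using assms by auto
qed

lemma mult_block_lt:
  fixes a b W e :: nat
  assumes "a < b" "e < W"
  shows "a*W + e < b*W"
proof -
  have "(a+1)*W \<le> b*W" using assms by (intro mult_le_mono1) simp
  then show ?thesis using assms by (simp add: algebra_simps)
qed

fun okind :: "obs \<Rightarrow> nat" where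
  "okind Silence = 0" | "okind Noise = 2" | "okind (Heard m) = 1" | "okind Nothing = 0"

definition lk :: "('b \<times> int \<times> mult) set \<Rightarrow> 'b \<Rightarrow> int \<Rightarrow> nat" where
  "lk L a b = (if (a, b, One) \<in> L then 1 else if (a, b, Many) \<in> L then 2 else 0)"

definition cset where
  "cset V E t cls v a b = {w \<in> contrib V E t cls v. cpair V t cls v w = (a, b)}"

lemma label_mem:
  "(a, b, m) \<in> label V E t cls v \<longleftrightarrow>
     cset V E t cls v a b \<noteq> {} \<and> m = (if card (cset V E t cls v a b) = 1 then One else Many)"
  unfolding label_def cset_def by auto

lemma lk_label:
  "lk (label V E t cls v) a b =
     (if cset V E t cls v a b = {} then 0 else if card (cset V E t cls v a b) = 1 then 1 else 2)"
  unfolding lk_def label_mem by auto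

lemma label_mem_lk:
  "(a, b, m) \<in> label V E t cls v \<longleftrightarrow>
     (lk (label V E t cls v) a b = 1 \<and> m = One) \<or> (lk (label V E t cls v) a b = 2 \<and> m = Many)"
  unfolding lk_label label_mem by auto

lemma label_eq_lk:
  assumes "\<And>a b. lk (label V E t cls u) a b = lk (label V E t cls v) a b"
  shows "label V E t cls u = label V E t cls v"
proof (rule set_eqI)
  fix x :: "'a set \<times> int \<times> mult"
  obtain a b m where x: "x = (a, b, m)" by (cases x) auto
  have "(a, b, m) \<in> label V E t cls u \<longleftrightarrow> (a, b, m) \<in> label V E t cls v"
    unfolding label_mem_lk[of a b m _ _ _ _ u] label_mem_lk[of a b m _ _ _ _ v] assms[of a b] ..
  then show "x \<in> label V E t cls u \<longleftrightarrow> x \<in> label V E t cls v" using x by simp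
qed

locale LE =
  fixes V :: "'a set" and E :: "'a \<Rightarrow> 'a \<Rightarrow> bool" and t :: "'a \<Rightarrow> nat"
    and i :: nat and idx :: "'a \<Rightarrow> nat"
  assumes cfg: "config V E t"
    and idx_inj: "inj_on idx V"
    and idx_lt: "\<And>v. v \<in> V \<Longrightarrow> idx v < card V"
begin

abbreviation "\<sigma> \<equiv> span V t"
abbreviation "n \<equiv> card V"
abbreviation "W \<equiv> 2 * \<sigma> + 1"
abbreviation "cl \<equiv> classes V E t"

lemma finV: "finite V" and neV: "V \<noteq> {}" and Esym: "E u v \<Longrightarrow> E v u"
  and EV: "E u v \<Longrightarrow> u \<in> V \<and> v \<in> V"
  using cfg unfolding config_def by blast+

lemma npos: "0 < n" using finV neV by (simp add: card_gt_0_iff)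

lemma t_le: "v \<in> V \<Longrightarrow> t v \<le> \<sigma>"
  unfolding span_def using finV by simp

lemma cl_Suc: "cl (Suc j) = refine V E t (cl j)"
  unfolding classes_def by simp

lemma cl_0: "cl 0 v = V"
  unfolding classes_def by simp

lemma cl_props: "v \<in> V \<Longrightarrow> v \<in> cl j v \<and> cl j v \<subseteq> V \<and> (\<forall>u\<in>cl j v. cl j u = cl j v)"
proof (induction j arbitrary: v)
  case 0
  show ?case unfolding cl_0 using "0" by blast
next
  case (Suc j)
  have IH1: "v \<in> cl j v" and IH2: "cl j v \<subseteq> V" and IH3: "\<And>u. u \<in> cl j v \<Longrightarrow> cl j u = cl j v"
    using Suc.IH[OF Suc.prems] by blast+
  have R: "cl (Suc j) x = {u \<in> cl j x. label V E t (cl j) u = label V E t (cl j) x}" for x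
    by (simp add: cl_Suc refine_def)
  show ?case
  proof (intro conjI ballI)
    show "v \<in> cl (Suc j) v" using IH1 unfolding R by blast
    show "cl (Suc j) v \<subseteq> V" using IH2 unfolding R by blast
    fix u assume "u \<in> cl (Suc j) v"
    then have u: "u \<in> cl j v" "label V E t (cl j) u = label V E t (cl j) v"
      unfolding R by blast+
    have "cl j u = cl j v" using IH3 u(1) by blast
    then show "cl (Suc j) u = cl (Suc j) v" using u(2) unfolding R by simp
  qed
qed

lemma cl_self: "v \<in> V \<Longrightarrow> v \<in> cl j v" using cl_props by blast
lemma cl_sub: "v \<in> V \<Longrightarrow> cl j v \<subseteq> V" using cl_props by blast
lemma cl_eq: "v \<in> V \<Longrightarrow> u \<in> cl j v \<Longrightarrow> cl j u = cl j v" using cl_props by blast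
lemma cl_fin: "v \<in> V \<Longrightarrow> finite (cl j v)" using cl_sub finV finite_subset by blast

definition sl :: "'a set \<Rightarrow> nat" where "sl C = Min (idx ` C)"

lemma sl_in: "v \<in> V \<Longrightarrow> \<exists>x\<in>cl j v. idx x = sl (cl j v)"
proof -
  assume v: "v \<in> V"
  have "sl (cl j v) \<in> idx ` cl j v" unfolding sl_def
    using cl_fin[OF v] cl_self[OF v] by (intro Min_in) blast+
  then show ?thesis by force
qed

lemma sl_lt: "v \<in> V \<Longrightarrow> sl (cl j v) < n"
  using sl_in cl_sub idx_lt by (metis subsetD)

lemma sl_inj: "v \<in> V \<Longrightarrow> w \<in> V \<Longrightarrow> sl (cl j v) = sl (cl j w) \<Longrightarrow> cl j v = cl j w"
proof -
  assume v: "v \<in> V" and w: "w \<in> V" and eq: "sl (cl j v) = sl (cl j w)"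
  obtain x where x: "x \<in> cl j v" "idx x = sl (cl j v)" using sl_in[OF v] by blast
  obtain y where y: "y \<in> cl j w" "idx y = sl (cl j w)" using sl_in[OF w] by blast
  have "x \<in> V" "y \<in> V" using x y cl_sub[OF v] cl_sub[OF w] by blast+
  then have "x = y" using x y eq idx_inj by (metis inj_on_eq_iff)
  then show ?thesis using x y cl_eq[OF v] cl_eq[OF w] by metis
qed

definition Q :: "nat \<Rightarrow> nat \<Rightarrow> nat" where "Q j s = 1 + (j * n + s) * W"
definition Tend :: nat where "Tend = Q i 0"
definition isTx :: "'a \<Rightarrow> nat \<Rightarrow> bool" where
  "isTx v L \<longleftrightarrow> (\<exists>j<i. L = Q j (sl (cl j v)) + \<sigma>)"
definition txg :: "'a \<Rightarrow> nat \<Rightarrow> bool" where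
  "txg w g \<longleftrightarrow> (\<exists>j<i. g = t w + Q j (sl (cl j w)) + \<sigma>)"
definition obsOf :: "'a set \<Rightarrow> obs" where
  "obsOf T = (if T = {} then Silence else if card T = 1 then Heard 0 else Noise)"
definition expo :: "'a \<Rightarrow> nat \<Rightarrow> obs" where
  "expo v k = (if isTx v k then Nothing else obsOf {w\<in>V. E v w \<and> txg w (t v + k)})"
definition hist :: "'a \<Rightarrow> nat \<Rightarrow> obs list" where
  "hist v L = map (expo v) [0..<L]"

primrec dec :: "nat \<Rightarrow> obs list \<Rightarrow> 'a set" where
  "dec 0 h = V"
| "dec (Suc j) h = {u \<in> dec j h. \<forall>C\<in>cl j ` V. \<forall>e\<le>2*\<sigma>.
      lk (label V E t (cl j) u) C (int e + 1) = okind (h ! (Q j (sl C) + e))}"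

definition Pd :: "obs list \<Rightarrow> action" where
  "Pd h = (if Tend \<le> length h then Terminate
           else if (\<exists>j<i. length h = Q j (sl (dec j h)) + \<sigma>) then Transmit 0 else Listen)"

lemma Q_pos: "1 \<le> Q j s" unfolding Q_def by simp

lemma Q_mono: "j * n + s \<le> j' * n + s' \<Longrightarrow> Q j s \<le> Q j' s'"
  unfolding Q_def by (rule add_left_mono, rule mult_le_mono1)

lemma Q_lt_next: "s < n \<Longrightarrow> e < W \<Longrightarrow> Q j s + e < Q (Suc j) 0"
proof -
  assume "s < n" "e < W"
  then have "(j * n + s) * W + e < (Suc j * n + 0) * W"
    by (intro mult_block_lt) auto
  then show ?thesis unfolding Q_def by simp
qed

lemma Q_le_mono: "j \<le> j' \<Longrightarrow> s < n \<Longrightarrow> e < W \<Longrightarrow> Q j s + e < Q (Suc j') 0"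
proof -
  assume a: "j \<le> j'" "s < n" "e < W"
  have "Q j s + e < Q (Suc j) 0" using a Q_lt_next by blast
  also have "Q (Suc j) 0 \<le> Q (Suc j') 0" using a by (intro Q_mono) (simp add: mult_le_mono1)
  finally show ?thesis .
qed

lemma Q_uniq:
  assumes "Q j s + x = Q j' s' + y" "s < n" "s' < n" "x < W + y" "y < W + x"
  shows "j = j' \<and> s = s' \<and> x = y"
proof -
  have "(j * n + s) * W + x = (j' * n + s') * W + y" using assms(1) unfolding Q_def by simp
  then have 1: "j * n + s = j' * n + s'" "x = y" using mult_block_uniq assms(4,5) by blast+
  have "(j * n + s) div n = j" "(j' * n + s') div n = j'" using assms(2,3) by auto
  moreover have "(j * n + s) mod n = s" "(j' * n + s') mod n = s'" using assms(2,3) by auto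
  ultimately show ?thesis using 1 by metis
qed

lemma isTx_lt: "isTx v L \<Longrightarrow> v \<in> V \<Longrightarrow> L < Tend"
proof -
  assume "isTx v L" "v \<in> V"
  then obtain j where j: "j < i" "L = Q j (sl (cl j v)) + \<sigma>" unfolding isTx_def by auto
  have "Q j (sl (cl j v)) + \<sigma> < Q (Suc (i - 1)) 0"
    using j \<open>v \<in> V\<close> sl_lt by (intro Q_le_mono) auto
  then show ?thesis using j unfolding Tend_def by simp
qed

lemma isTx_ge: "isTx v L \<Longrightarrow> \<sigma> < L"
proof -
  assume "isTx v L"
  then obtain j where "L = Q j (sl (cl j v)) + \<sigma>" unfolding isTx_def by blast
  moreover have "1 \<le> Q j (sl (cl j v))" by (rule Q_pos)
  ultimately show ?thesis by linarith
qed

lemma txg_iff: "txg w g \<longleftrightarrow> t w < g \<and> isTx w (g - t w)"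
proof
  assume "txg w g"
  then obtain j where j: "j < i" "g = t w + Q j (sl (cl j w)) + \<sigma>" unfolding txg_def by blast
  moreover have "1 \<le> Q j (sl (cl j w))" by (rule Q_pos)
  ultimately show "t w < g \<and> isTx w (g - t w)" unfolding isTx_def by force
next
  assume a: "t w < g \<and> isTx w (g - t w)"
  then obtain j where j: "j < i" "g - t w = Q j (sl (cl j w)) + \<sigma>" unfolding isTx_def by blast
  then have "g = t w + Q j (sl (cl j w)) + \<sigma>" using a by linarith
  then show "txg w g" unfolding txg_def using j by blast
qed

lemma isTx_at:
  assumes v: "v \<in> V" and c: "c \<in> V" and j: "j < i" and e: "e < W"
  shows "isTx v (Q j (sl (cl j c)) + e) \<longleftrightarrow> e = \<sigma> \<and> cl j c = cl j v"
proof
  assume "isTx v (Q j (sl (cl j c)) + e)"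
  then obtain j' where j': "j' < i" "Q j (sl (cl j c)) + e = Q j' (sl (cl j' v)) + \<sigma>"
    unfolding isTx_def by blast
  have "j = j' \<and> sl (cl j c) = sl (cl j' v) \<and> e = \<sigma>"
    using Q_uniq[OF j'(2)] sl_lt[OF c] sl_lt[OF v] e by auto
  then show "e = \<sigma> \<and> cl j c = cl j v" using sl_inj[OF c v] by auto
next
  assume "e = \<sigma> \<and> cl j c = cl j v"
  then show "isTx v (Q j (sl (cl j c)) + e)" unfolding isTx_def using j by auto
qed

lemma txg_at:
  assumes v: "v \<in> V" and w: "w \<in> V" and c: "c \<in> V" and j: "j < i" and e: "e \<le> 2 * \<sigma>"
  shows "txg w (t v + (Q j (sl (cl j c)) + e)) \<longleftrightarrow> cl j w = cl j c \<and> t w + \<sigma> = t v + e"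
proof
  assume "txg w (t v + (Q j (sl (cl j c)) + e))"
  then obtain j' where j': "j' < i" "t v + (Q j (sl (cl j c)) + e) = t w + Q j' (sl (cl j' w)) + \<sigma>"
    unfolding txg_def by blast
  have eq: "Q j (sl (cl j c)) + (t v + e) = Q j' (sl (cl j' w)) + (t w + \<sigma>)" using j'(2) by simp
  have tv: "t v \<le> \<sigma>" "t w \<le> \<sigma>" using t_le v w by auto
  have "j = j' \<and> sl (cl j c) = sl (cl j' w) \<and> t v + e = t w + \<sigma>"
    by (rule Q_uniq[OF eq sl_lt[OF c] sl_lt[OF w]]) (use tv e in linarith)+
  then show "cl j w = cl j c \<and> t w + \<sigma> = t v + e" using sl_inj[OF c w] by auto
next
  assume "cl j w = cl j c \<and> t w + \<sigma> = t v + e"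
  then show "txg w (t v + (Q j (sl (cl j c)) + e))" unfolding txg_def using j
    by (intro exI[of _ j]) auto
qed

lemma core:
  assumes v: "v \<in> V" and c: "c \<in> V" and j: "j < i" and e: "e \<le> 2 * \<sigma>"
  shows "okind (expo v (Q j (sl (cl j c)) + e)) = lk (label V E t (cl j) v) (cl j c) (int e + 1)"
proof -
  define S where "S = {w\<in>V. E v w \<and> cl j w = cl j c \<and> t w + \<sigma> = t v + e}"
  have finS: "finite S" unfolding S_def using finV by simp
  have T: "{w\<in>V. E v w \<and> txg w (t v + (Q j (sl (cl j c)) + e))} = S"
    unfolding S_def using txg_at[OF v _ c j e] by blast
  have cp: "cpair V t (cl j) v w = (cl j c, int e + 1) \<longleftrightarrow> cl j w = cl j c \<and> t w + \<sigma> = t v + e" for w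
    unfolding cpair_def by auto
  have CS: "cset V E t (cl j) v (cl j c) (int e + 1) = (if e = \<sigma> \<and> cl j c = cl j v then {} else S)"
    unfolding cset_def contrib_def cp S_def by auto
  have tx: "isTx v (Q j (sl (cl j c)) + e) \<longleftrightarrow> e = \<sigma> \<and> cl j c = cl j v"
    using isTx_at[OF v c j] e by simp
  show ?thesis
    unfolding lk_label CS expo_def tx T obsOf_def using finS
    by (cases "S = {}") auto
qed

lemma lk_range:
  assumes u: "u \<in> V" and nz: "lk (label V E t (cl j) u) a b \<noteq> 0"
  shows "a \<in> cl j ` V \<and> (\<exists>e\<le>2*\<sigma>. b = int e + 1)"
proof -
  have "cset V E t (cl j) u a b \<noteq> {}" using nz unfolding lk_label by (auto split: if_splits)
  then obtain w where w: "w \<in> V" "a = cl j w" "b = int \<sigma> + 1 + int (t w) - int (t u)"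
    unfolding cset_def contrib_def cpair_def by auto
  have tt: "t u \<le> \<sigma>" "t w \<le> \<sigma>" using t_le u w(1) by auto
  have "b = int (\<sigma> + t w - t u) + 1" using w(3) tt by simp
  moreover have "\<sigma> + t w - t u \<le> 2*\<sigma>" using tt by simp
  ultimately show ?thesis using w by blast
qed

lemma dec_correct:
  assumes v: "v \<in> V"
  shows "j \<le> i \<Longrightarrow> Q j 0 \<le> length h \<Longrightarrow> (\<forall>k<length h. h ! k = expo v k) \<Longrightarrow> dec j h = cl j v"
proof (induction j)
  case 0
  then show ?case by (simp add: cl_0)
next
  case (Suc j)
  have "Q j 0 \<le> Q (Suc j) 0" by (rule Q_mono) simp
  then have IH: "dec j h = cl j v" using Suc by simp
  have jl: "j < i" using Suc by simp
  have pos: "okind (h ! (Q j (sl (cl j c)) + e)) = lk (label V E t (cl j) v) (cl j c) (int e + 1)"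
    if c: "c \<in> V" and e: "e \<le> 2*\<sigma>" for c e
  proof -
    have "Q j (sl (cl j c)) + e < Q (Suc j) 0" using sl_lt[OF c] e by (intro Q_lt_next) auto
    then have "h ! (Q j (sl (cl j c)) + e) = expo v (Q j (sl (cl j c)) + e)" using Suc by simp
    then show ?thesis using core[OF v c jl e] by simp
  qed
  have lab: "(\<forall>C\<in>cl j ` V. \<forall>e\<le>2*\<sigma>. lk (label V E t (cl j) u) C (int e + 1) = okind (h ! (Q j (sl C) + e)))
     \<longleftrightarrow> label V E t (cl j) u = label V E t (cl j) v" if u: "u \<in> V" for u
  proof
    assume A: "\<forall>C\<in>cl j ` V. \<forall>e\<le>2*\<sigma>. lk (label V E t (cl j) u) C (int e + 1) = okind (h ! (Q j (sl C) + e))"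
    have B: "lk (label V E t (cl j) u) C (int e + 1) = lk (label V E t (cl j) v) C (int e + 1)"
      if "C \<in> cl j ` V" "e \<le> 2*\<sigma>" for C e
      using A pos that by force
    show "label V E t (cl j) u = label V E t (cl j) v"
    proof (rule label_eq_lk)
      fix a b
      show "lk (label V E t (cl j) u) a b = lk (label V E t (cl j) v) a b"
      proof (cases "a \<in> cl j ` V \<and> (\<exists>e\<le>2*\<sigma>. b = int e + 1)")
        case True
        then show ?thesis using B by blast
      next
        case False
        then have "lk (label V E t (cl j) u) a b = 0" "lk (label V E t (cl j) v) a b = 0"
          using lk_range[OF u, of j a b] lk_range[OF v, of j a b] by blast+
        then show ?thesis by simp
      qed
    qed
  next
    assume "label V E t (cl j) u = label V E t (cl j) v"
    then show "\<forall>C\<in>cl j ` V. \<forall>e\<le>2*\<sigma>. lk (label V E t (cl j) u) C (int e + 1) = okind (h ! (Q j (sl C) + e))"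
      using pos by auto
  qed
  have "dec (Suc j) h = {u \<in> cl j v. label V E t (cl j) u = label V E t (cl j) v}"
    using lab cl_sub[OF v] unfolding dec.simps IH by blast
  then show ?case by (simp add: cl_Suc refine_def)
qed

lemma Pd_hist:
  assumes v: "v \<in> V"
  shows "Pd (hist v L) = (if Tend \<le> L then Terminate else if isTx v L then Transmit 0 else Listen)"
proof -
  have len: "length (hist v L) = L" unfolding hist_def by simp
  have nth: "\<forall>k<length (hist v L). hist v L ! k = expo v k" unfolding hist_def by simp
  have "(\<exists>j<i. L = Q j (sl (dec j (hist v L))) + \<sigma>) \<longleftrightarrow> isTx v L"
  proof -
    have "dec j (hist v L) = cl j v" if "j < i" "Q j 0 \<le> L" for j
      using dec_correct[OF v] that nth len by simp
    moreover have "Q j 0 \<le> Q j s + \<sigma>" for j s by (simp add: Q_mono trans_le_add1)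
    ultimately show ?thesis unfolding isTx_def by metis
  qed
  then show ?thesis unfolding Pd_def len by simp
qed

definition st :: "nat \<Rightarrow> 'a \<Rightarrow> nstate" where
  "st r v = (if r \<le> t v then Asleep else if r - t v \<le> Tend then Awake (hist v (r - t v))
             else Done (hist v Tend))"

lemma Tend_pos: "1 \<le> Tend" unfolding Tend_def by (rule Q_pos)

lemma act_st:
  assumes s: "\<forall>w\<in>V. s w = st r w" and w: "w \<in> V"
  shows "tmsg (act Pd s w) = (if txg w r then Some 0 else None)"
proof -
  consider (a) "r \<le> t w" | (b) "t w < r" "r - t w \<le> Tend" | (c) "t w < r" "\<not> r - t w \<le> Tend"
    by linarith
  then show ?thesis
  proof cases
    case a
    then show ?thesis using s w unfolding act_def st_def txg_iff by simp
  next
    case b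
    have "act Pd s w = Pd (hist w (r - t w))" using s w b unfolding act_def st_def by simp
    also have "\<dots> = (if Tend \<le> r - t w then Terminate else if isTx w (r - t w) then Transmit 0 else Listen)"
      by (rule Pd_hist[OF w])
    finally show ?thesis using b isTx_lt[OF _ w, of "r - t w"] unfolding txg_iff by auto
  next
    case c
    then show ?thesis using s w isTx_lt[OF _ w, of "r - t w"] unfolding act_def st_def txg_iff by auto
  qed
qed

lemma heard_st:
  assumes s: "\<forall>w\<in>V. s w = st r w"
  shows "heard V E Pd s v = obsOf {w\<in>V. E v w \<and> txg w r}"
proof -
  have T: "transmitters V E Pd s v = {w\<in>V. E v w \<and> txg w r}"
    unfolding transmitters_def using act_st[OF s] by (auto split: if_splits)
  show ?thesis
  proof (cases "card {w\<in>V. E v w \<and> txg w r} = 1")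
    case True
    then obtain x where x: "{w\<in>V. E v w \<and> txg w r} = {x}" by (auto simp: card_Suc_eq)
    then have "x \<in> V" "txg x r" by auto
    then have "tmsg (act Pd s x) = Some 0" using act_st[OF s] by simp
    then show ?thesis unfolding heard_def T obsOf_def Let_def using x by simp
  next
    case False
    then show ?thesis unfolding heard_def T obsOf_def Let_def by auto
  qed
qed

lemma hist_Suc: "hist v (Suc L) = hist v L @ [expo v L]"
  unfolding hist_def by simp

lemma run_st: "\<forall>v\<in>V. run V E t Pd r v = st r v"
proof (induction r)
  case 0
  then show ?case unfolding st_def by simp
next
  case (Suc r)
  let ?s = "run V E t Pd r"
  have H: "heard V E Pd ?s v = obsOf {w\<in>V. E v w \<and> txg w r}" for v
    by (rule heard_st[OF Suc.IH])
  show ?case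
  proof
    fix v assume v: "v \<in> V"
    have sv: "?s v = st r v" using Suc.IH v by blast
    have R: "run V E t Pd (Suc r) v = step V E t Pd r ?s v" by simp
    consider (a) "r < t v" | (b) "r = t v" | (c) "t v < r" "r - t v < Tend"
      | (d) "t v < r" "r - t v = Tend" | (e) "t v < r" "Tend < r - t v" by linarith
    then show "run V E t Pd (Suc r) v = st (Suc r) v"
    proof cases
      case a
      have E0: "{w\<in>V. E v w \<and> txg w r} = {}"
        using a t_le[OF v] isTx_ge unfolding txg_iff by fastforce
      show ?thesis using a sv unfolding R step_def H E0 by (simp add: st_def obsOf_def)
    next
      case b
      have E0: "{w\<in>V. E v w \<and> txg w r} = {}"
        using b t_le[OF v] isTx_ge unfolding txg_iff by fastforce
      have nt: "\<not> isTx v 0" using isTx_ge by blast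
      have ex: "expo v 0 = Silence"
        using nt E0 b unfolding expo_def obsOf_def by simp
      have "hist v 1 = [Silence]" using ex unfolding hist_def by simp
      then show ?thesis using b sv Tend_pos unfolding R step_def H E0 by (simp add: st_def obsOf_def)
    next
      case c
      let ?L = "r - t v"
      have sv': "?s v = Awake (hist v ?L)" using sv c unfolding st_def by simp
      have P: "Pd (hist v ?L) = (if isTx v ?L then Transmit 0 else Listen)"
        using Pd_hist[OF v] c by simp
      have rr: "t v + ?L = r" using c by simp
      have "Suc r - t v = Suc ?L" using c by simp
      then have st': "st (Suc r) v = Awake (hist v ?L @ [expo v ?L])"
        using c hist_Suc[of v ?L] unfolding st_def by simp
      show ?thesis
      proof (cases "isTx v ?L")
        case True
        then show ?thesis unfolding R step_def sv' st' expo_def using P by simp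
      next
        case False
        then show ?thesis unfolding R step_def sv' st' expo_def H using P rr by simp
      qed
    next
      case d
      have sv': "?s v = Awake (hist v Tend)" using sv d unfolding st_def by simp
      have P: "Pd (hist v Tend) = Terminate" using Pd_hist[OF v] by simp
      have "st (Suc r) v = Done (hist v Tend)" using d unfolding st_def by simp
      then show ?thesis unfolding R step_def sv' using P by simp
    next
      case e
      have sv': "?s v = Done (hist v Tend)" using sv e unfolding st_def by simp
      show ?thesis using e unfolding R step_def sv' by (simp add: st_def)
    qed
  qed
qed

lemma elects_final:
  assumes v0: "v0 \<in> V" and c1: "card (cl i v0) = 1"
  shows "elects V E t Pd (\<lambda>h. dec i h = cl i v0)"
proof -
  let ?r = "\<sigma> + Tend + 1"
  have dn: "run V E t Pd ?r v = Done (hist v Tend)" if "v \<in> V" for v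
  proof -
    have "run V E t Pd ?r v = st ?r v" using run_st that by blast
    then show ?thesis using t_le[OF that] unfolding st_def by simp
  qed
  have dh: "dec i (hist v Tend) = cl i v" if "v \<in> V" for v
    using dec_correct[OF that, of i "hist v Tend"] unfolding hist_def Tend_def by simp
  have single: "cl i v0 = {v0}" using c1 cl_self[OF v0] by (metis card_1_singletonE singletonD)
  have iff: "cl i v = cl i v0 \<longleftrightarrow> v = v0" if "v \<in> V" for v
    using cl_self[OF that] single by auto
  show ?thesis unfolding elects_def
  proof (intro exI[of _ ?r] conjI)
    show "\<forall>v\<in>V. \<exists>h. run V E t Pd ?r v = Done h" using dn by blast
    show "\<exists>!v. v \<in> V \<and> (\<exists>h. run V E t Pd ?r v = Done h \<and> dec i h = cl i v0)"
    proof (rule ex1I[of _ v0])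
      show "v0 \<in> V \<and> (\<exists>h. run V E t Pd ?r v0 = Done h \<and> dec i h = cl i v0)"
        using v0 dn dh by blast
      fix v assume "v \<in> V \<and> (\<exists>h. run V E t Pd ?r v = Done h \<and> dec i h = cl i v0)"
      then show "v = v0" using dn dh iff by auto
    qed
  qed
qed

end

theorem lemma8:
  fixes V :: "'a set" and E :: "'a \<Rightarrow> 'a \<Rightarrow> bool" and t :: "'a \<Rightarrow> nat"
  assumes "config V E t"
    and "classifier_yes V E t"
  shows "feasible V E t"
proof -
  have fin: "finite V" using assms(1) unfolding config_def by blast
  obtain idx where idx: "bij_betw idx V {0..<card V}" using ex_bij_betw_finite_nat[OF fin] by blast
  obtain i where "has_singleton V E t i" using assms(2) unfolding classifier_yes_def by blast
  then obtain v0 where v0: "v0 \<in> V" "card (classes V E t i v0) = 1"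
    unfolding has_singleton_def by blast
  interpret LE V E t i idx
  proof
    show "config V E t" by (rule assms(1))
    show "inj_on idx V" using idx by (rule bij_betw_imp_inj_on)
    show "\<And>v. v \<in> V \<Longrightarrow> idx v < card V" using idx unfolding bij_betw_def by auto
  qed
  show ?thesis unfolding feasible_def using elects_final[OF v0] by blast
qed

end
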